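(* Let $T$ be a tree. Then $T$ has a complete $\alpha$-labeling if and only if there is a bipartition of $T$ and an arrangement of the vertices of $T$ such that the corresponding biadjacency matrix of $T$ is completely graceful.
   Context: For a graph $G=(V,E)$ with $m$ edges, an $\alpha$-labeling with critical number $k$ is an injective $f:V\to\{0,\ldots,m\}$ whose edge labels $|f(u)-f(v)|$ ($uv\in E$) are distinct and such that every edge $uv$ satisfies $f(u)\le k<f(v)$ or $f(v)\le k<f(u)$; it is complete if $f$ is bijective. For a bipartite graph with ordered parts $X,Y$, the biadjacency matrix is the $|X|\times|Y|$ $0$-$1$ matrix whose $(x,y)$ entry is $1$ iff $xy$ is an edge. For a $p\times q$ matrix the box-value of position $(i,j)$ is $p+j-i$; for $c=1,\ldots,p+q-1$ the positions of box-value $c$ form a diagonal. A $0$-$1$ matrix is completely graceful if every diagonal contains exactly one $1$. *)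

theory Defs
  imports Main
begin

definition simple_graph :: "'a set \<Rightarrow> 'a set set \<Rightarrow> bool" where
  "simple_graph V E \<longleftrightarrow> finite V \<and>
     (\<forall>e\<in>E. \<exists>u v. e = {u, v} \<and> u \<noteq> v \<and> u \<in> V \<and> v \<in> V)"

definition connected_graph :: "'a set \<Rightarrow> 'a set set \<Rightarrow> bool" where
  "connected_graph V E \<longleftrightarrow> V \<noteq> {} \<and>
     (\<forall>u\<in>V. \<forall>v\<in>V. (\<lambda>x y. {x, y} \<in> E)\<^sup>*\<^sup>* u v)"

definition is_cycle :: "'a set set \<Rightarrow> 'a list \<Rightarrow> bool" where
  "is_cycle E cs \<longleftrightarrow> length cs \<ge> 3 \<and> distinct cs \<and>
     (\<forall>i. Suc i < length cs \<longrightarrow> {cs ! i, cs ! Suc i} \<in> E) \<and>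
     {last cs, hd cs} \<in> E"

definition is_tree :: "'a set \<Rightarrow> 'a set set \<Rightarrow> bool" where
  "is_tree V E \<longleftrightarrow> simple_graph V E \<and> connected_graph V E \<and> (\<nexists>cs. is_cycle E cs)"

definition complete_alpha_labeling :: "'a set \<Rightarrow> 'a set set \<Rightarrow> ('a \<Rightarrow> nat) \<Rightarrow> nat \<Rightarrow> bool" where
  "complete_alpha_labeling V E f k \<longleftrightarrow>
     bij_betw f V {0..card E} \<and>
     (\<forall>u v u' v'. {u, v} \<in> E \<longrightarrow> {u', v'} \<in> E \<longrightarrow>
        \<bar>int (f u) - int (f v)\<bar> = \<bar>int (f u') - int (f v')\<bar> \<longrightarrow> {u, v} = {u', v'}) \<and>
     (\<forall>u v. {u, v} \<in> E \<longrightarrow> (f u \<le> k \<and> k < f v) \<or> (f v \<le> k \<and> k < f u))"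

definition has_complete_alpha_labeling :: "'a set \<Rightarrow> 'a set set \<Rightarrow> bool" where
  "has_complete_alpha_labeling V E \<longleftrightarrow> (\<exists>f k. complete_alpha_labeling V E f k)"

definition is_bipartition :: "'a set \<Rightarrow> 'a set set \<Rightarrow> 'a set \<Rightarrow> 'a set \<Rightarrow> bool" where
  "is_bipartition V E X Y \<longleftrightarrow> X \<union> Y = V \<and> X \<inter> Y = {} \<and>
     (\<forall>u v. {u, v} \<in> E \<longrightarrow> (u \<in> X \<and> v \<in> Y) \<or> (u \<in> Y \<and> v \<in> X))"

definition biadj_matrix :: "'a set set \<Rightarrow> (nat \<Rightarrow> 'a) \<Rightarrow> (nat \<Rightarrow> 'a) \<Rightarrow> nat \<Rightarrow> nat \<Rightarrow> nat" where
  "biadj_matrix E xs ys = (\<lambda>i j. if {xs i, ys j} \<in> E then 1 else 0)"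

text \<open>A p x q 0-1 matrix (rows 1..p, columns 1..q) is completely graceful if each
  diagonal of box-value c = p + j - i, c = 1..p+q-1, contains exactly one 1.\<close>

definition completely_graceful :: "nat \<Rightarrow> nat \<Rightarrow> (nat \<Rightarrow> nat \<Rightarrow> nat) \<Rightarrow> bool" where
  "completely_graceful p q M \<longleftrightarrow>
     (\<forall>i\<in>{1..p}. \<forall>j\<in>{1..q}. M i j \<in> {0, 1}) \<and>
     (\<forall>c\<in>{1..p + q - 1}. \<exists>!ij. fst ij \<in> {1..p} \<and> snd ij \<in> {1..q} \<and>
         p + snd ij - fst ij = c \<and> M (fst ij) (snd ij) = 1)"

end

theory Submission
  imports Defs
begin

lemma edge_in_V:
  assumes "simple_graph V E" "{u,v} \<in> E" shows "u \<in> V" "v \<in> V" "u \<noteq> v"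
proof -
  obtain a b where "{u,v} = {a,b}" "a\<noteq>b" "a\<in>V" "b\<in>V"
    using assms unfolding simple_graph_def by blast
  then show "u \<in> V" "v \<in> V" "u \<noteq> v" by (auto simp: doubleton_eq_iff)
qed

lemma finite_E: assumes "simple_graph V E" shows "finite E"
proof -
  have "E \<subseteq> Pow V" using assms unfolding simple_graph_def by auto
  moreover have "finite V" using assms unfolding simple_graph_def by auto
  ultimately show ?thesis by (meson finite_Pow_iff finite_subset)
qed

lemma ex1_uniq: "\<exists>!x. Q x \<Longrightarrow> Q a \<Longrightarrow> Q b \<Longrightarrow> a = b" by blast

lemma bwd:
  assumes sg: "simple_graph V E" and ne: "V \<noteq> {}"
    and bip: "is_bipartition V E X Y"
    and bx: "bij_betw xs {1..card X} X" and byy: "bij_betw ys {1..card Y} Y"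
    and cg: "completely_graceful (card X) (card Y) (biadj_matrix E xs ys)"
  shows "has_complete_alpha_labeling V E"
proof -
  define p where "p = card X"
  define q where "q = card Y"
  define M where "M = biadj_matrix E xs ys"
  have XY: "X \<union> Y = V" "X \<inter> Y = {}"
    and bipE: "\<And>u v. {u,v} \<in> E \<Longrightarrow> (u \<in> X \<and> v \<in> Y) \<or> (u \<in> Y \<and> v \<in> X)"
    using bip unfolding is_bipartition_def by auto
  have finV: "finite V" using sg unfolding simple_graph_def by auto
  have finX: "finite X" and finY: "finite Y" using XY finV by auto
  have cVpq: "card V = p + q" using XY finX finY card_Un_disjoint unfolding p_def q_def by metis
  have "card V > 0" using finV ne by (simp add: card_gt_0_iff)
  hence pq1: "p + q \<ge> 1" using cVpq by linarith
  have xsX: "\<And>i. i \<in> {1..p} \<Longrightarrow> xs i \<in> X" using bx p_def bij_betw_apply by metis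
  have ysY: "\<And>j. j \<in> {1..q} \<Longrightarrow> ys j \<in> Y" using byy q_def bij_betw_apply by metis
  have injx: "inj_on xs {1..p}" using bx p_def bij_betw_imp_inj_on by blast
  have injy: "inj_on ys {1..q}" using byy q_def bij_betw_imp_inj_on by blast
  have surjx: "xs ` {1..p} = X" using bx p_def bij_betw_imp_surj_on by blast
  have surjy: "ys ` {1..q} = Y" using byy q_def bij_betw_imp_surj_on by blast
  define f where "f = (\<lambda>v. if v \<in> X then the_inv_into {1..p} xs v - 1
                           else p + the_inv_into {1..q} ys v - 1)"
  have fx: "f (xs i) = i - 1" if i: "i \<in> {1..p}" for i
  proof -
    have "the_inv_into {1..p} xs (xs i) = i" using the_inv_into_f_f[OF injx i] .
    thus ?thesis using xsX[OF i] unfolding f_def by simp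
  qed
  have fy: "f (ys j) = p + j - 1" if j: "j \<in> {1..q}" for j
  proof -
    have "ys j \<in> Y" using j by (rule ysY)
    hence "ys j \<notin> X" using XY by auto
    moreover have "the_inv_into {1..q} ys (ys j) = j" using the_inv_into_f_f[OF injy j] .
    ultimately show ?thesis unfolding f_def by simp
  qed
  define P where "P = {ij. fst ij \<in> {1..p} \<and> snd ij \<in> {1..q} \<and> M (fst ij) (snd ij) = 1}"
  have diag: "\<And>i j. i \<in> {1..p} \<Longrightarrow> j\<in>{1..q} \<Longrightarrow> p + j - i \<in> {1..p+q-1}" by auto
  have cg1: "\<forall>c\<in>{1..p+q-1}. \<exists>!ij. fst ij \<in> {1..p} \<and> snd ij \<in> {1..q} \<and>
      p + snd ij - fst ij = c \<and> M (fst ij) (snd ij) = 1"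
    using cg unfolding completely_graceful_def p_def q_def M_def by blast
  have uniq: "a = b" if a: "a \<in> P" and b: "b \<in> P" and e: "p + snd a - fst a = p + snd b - fst b" for a b
  proof -
    let ?c = "p + snd a - fst a"
    have "?c \<in> {1..p+q-1}" using a diag unfolding P_def by auto
    then have "\<exists>!ij. fst ij \<in> {1..p} \<and> snd ij \<in> {1..q} \<and>
      p + snd ij - fst ij = ?c \<and> M (fst ij) (snd ij) = 1" using cg1 by blast
    then show "a = b" 
      by (rule ex1_uniq) (use a b e in \<open>auto simp: P_def\<close>)
  qed
  have exi: "\<And>c. c \<in> {1..p+q-1} \<Longrightarrow> \<exists>a\<in>P. p + snd a - fst a = c"
    using cg1 unfolding P_def by blast
  have bijP: "bij_betw (\<lambda>a. p + snd a - fst a) P {1..p+q-1}"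
    unfolding bij_betw_def inj_on_def
  proof (intro conjI ballI impI)
    show "(\<lambda>a. p + snd a - fst a) ` P = {1..p + q - 1}"
    proof
      show "(\<lambda>a. p + snd a - fst a) ` P \<subseteq> {1..p + q - 1}" using diag unfolding P_def by auto
      show "{1..p + q - 1} \<subseteq> (\<lambda>a. p + snd a - fst a) ` P" using exi by force
    qed
  qed (use uniq in auto)
  have bijE: "bij_betw (\<lambda>a. {xs (fst a), ys (snd a)}) P E"
    unfolding bij_betw_def
  proof (intro conjI)
    show "inj_on (\<lambda>a. {xs (fst a), ys (snd a)}) P"
    proof (rule inj_onI)
      fix a b assume a: "a \<in> P" and b: "b \<in> P" and e: "{xs (fst a), ys (snd a)} = {xs (fst b), ys (snd b)}"
      have ra: "fst a \<in> {1..p}" "snd a \<in> {1..q}" using a unfolding P_def by auto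
      have rb: "fst b \<in> {1..p}" "snd b \<in> {1..q}" using b unfolding P_def by auto
      have "xs (fst a) \<in> X" "ys (snd b) \<in> Y" using xsX ysY ra rb by auto
      hence "xs (fst a) \<noteq> ys (snd b)" using XY(2) by auto
      hence "xs (fst a) = xs (fst b) \<and> ys (snd a) = ys (snd b)" using e by (simp add: doubleton_eq_iff)
      hence "fst a = fst b" "snd a = snd b" using injx injy ra rb unfolding inj_on_def by blast+
      thus "a = b" by (simp add: prod_eq_iff)
    qed
    show "(\<lambda>a. {xs (fst a), ys (snd a)}) ` P = E"
    proof
      show "(\<lambda>a. {xs (fst a), ys (snd a)}) ` P \<subseteq> E"
        unfolding P_def M_def biadj_matrix_def by (auto split: if_splits)
      show "E \<subseteq> (\<lambda>a. {xs (fst a), ys (snd a)}) ` P"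
      proof
        fix e assume e: "e \<in> E"
        then obtain u v where uv: "e = {u,v}" using sg unfolding simple_graph_def by blast
        have "\<exists>u' v'. e = {u',v'} \<and> u' \<in> X \<and> v' \<in> Y"
          using bipE[of u v] e uv by (metis insert_commute)
        then obtain u' v' where uv': "e = {u',v'}" "u' \<in> X" "v' \<in> Y" by blast
        obtain i where i: "i \<in> {1..p}" "xs i = u'" using surjx uv' by blast
        obtain j where j: "j \<in> {1..q}" "ys j = v'" using surjy uv' by blast
        have "(i,j) \<in> P" using i j e uv' unfolding P_def M_def biadj_matrix_def by auto
        thus "e \<in> (\<lambda>a. {xs (fst a), ys (snd a)}) ` P" using i j uv' by force
      qed
    qed
  qed
  have cE: "card E = p + q - 1"
    using bij_betw_same_card[OF bijP] bij_betw_same_card[OF bijE] by simp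
  have edge: "\<exists>a\<in>P. {u,v} = {xs (fst a), ys (snd a)} \<and>
      \<bar>int (f u) - int (f v)\<bar> = int (p + snd a - fst a)" if uv: "{u,v} \<in> E" for u v
  proof -
    have "(\<lambda>a. {xs (fst a), ys (snd a)}) ` P = E" using bijE by (simp add: bij_betw_def)
    hence "{u,v} \<in> (\<lambda>a. {xs (fst a), ys (snd a)}) ` P" using uv by simp
    then obtain a where a: "a \<in> P" "{u,v} = {xs (fst a), ys (snd a)}" by (rule imageE) simp
    have r: "fst a \<in> {1..p}" "snd a \<in> {1..q}" using a unfolding P_def by auto
    have "(u = xs (fst a) \<and> v = ys (snd a)) \<or> (v = xs (fst a) \<and> u = ys (snd a))"
      using a by (auto simp: doubleton_eq_iff)
    then have "\<bar>int (f u) - int (f v)\<bar> = int (p + snd a - fst a)"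
      using fx[OF r(1)] fy[OF r(2)] r by auto
    thus ?thesis using a by blast
  qed
  have Vcases: "(\<exists>i\<in>{1..p}. v = xs i) \<or> (\<exists>j\<in>{1..q}. v = ys j)" if "v \<in> V" for v
    using that XY surjx surjy by blast
  have injf: "inj_on f V"
  proof (rule inj_onI)
    fix u v assume u: "u \<in> V" and v: "v \<in> V" and e: "f u = f v"
    show "u = v"
      using Vcases[OF u] Vcases[OF v]
    proof (elim disjE bexE)
      fix i i' assume h: "i \<in> {1..p}" "u = xs i" "i' \<in> {1..p}" "v = xs i'"
      have "i - 1 = i' - 1" using e fx[OF h(1)] fx[OF h(3)] h(2,4) by simp
      hence "i = i'" using h(1,3) by auto
      thus "u = v" using h by simp
    next
      fix i j assume h: "i \<in> {1..p}" "u = xs i" "j \<in> {1..q}" "v = ys j"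
      have "i - 1 = p + j - 1" using e fx[OF h(1)] fy[OF h(3)] h(2,4) by simp
      thus "u = v" using h(1,3) by auto
    next
      fix i j assume h: "j \<in> {1..q}" "u = ys j" "i \<in> {1..p}" "v = xs i"
      have "i - 1 = p + j - 1" using e fx[OF h(3)] fy[OF h(1)] h(2,4) by simp
      thus "u = v" using h(1,3) by auto
    next
      fix j j' assume h: "j \<in> {1..q}" "u = ys j" "j' \<in> {1..q}" "v = ys j'"
      have "p + j - 1 = p + j' - 1" using e fy[OF h(1)] fy[OF h(3)] h(2,4) by simp
      hence "j = j'" using h(1,3) by auto
      thus "u = v" using h by simp
    qed
  qed
  have fV: "f ` V \<subseteq> {0..card E}"
  proof
    fix n assume "n \<in> f ` V"
    then obtain v where v: "v \<in> V" "n = f v" by blast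
    show "n \<in> {0..card E}" using Vcases[OF v(1)] fx fy v cE by force
  qed
  have "card (f ` V) = card {0..card E}" using card_image[OF injf] cVpq cE pq1 by simp
  hence "f ` V = {0..card E}" using fV by (simp add: card_subset_eq)
  hence bijf: "bij_betw f V {0..card E}" using injf unfolding bij_betw_def by blast
  have dist: "{u, v} = {u', v'}" if h: "{u, v} \<in> E" "{u', v'} \<in> E"
    "\<bar>int (f u) - int (f v)\<bar> = \<bar>int (f u') - int (f v')\<bar>" for u v u' v'
  proof -
    obtain a where a: "a\<in>P" "{u,v} = {xs (fst a), ys (snd a)}"
      "\<bar>int (f u) - int (f v)\<bar> = int (p + snd a - fst a)" using edge[OF h(1)] by blast
    obtain b where b: "b\<in>P" "{u',v'} = {xs (fst b), ys (snd b)}"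
      "\<bar>int (f u') - int (f v')\<bar> = int (p + snd b - fst b)" using edge[OF h(2)] by blast
    have "a = b" using uniq a b h(3) by simp
    thus ?thesis using a b by simp
  qed
  have crit: "(f u \<le> p - 1 \<and> p - 1 < f v) \<or> (f v \<le> p - 1 \<and> p - 1 < f u)" if h: "{u, v} \<in> E" for u v
  proof -
    obtain a where a: "a\<in>P" "{u,v} = {xs (fst a), ys (snd a)}" using edge[OF h] by blast
    have r: "fst a \<in> {1..p}" "snd a \<in> {1..q}" using a unfolding P_def by auto
    have "(u = xs (fst a) \<and> v = ys (snd a)) \<or> (v = xs (fst a) \<and> u = ys (snd a))"
      using a by (auto simp: doubleton_eq_iff)
    thus ?thesis using fx[OF r(1)] fy[OF r(2)] r by auto
  qed
  show ?thesis unfolding has_complete_alpha_labeling_def complete_alpha_labeling_def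
    using bijf dist crit by blast
qed

lemma fwd:
  assumes sg: "simple_graph V E" and cal: "complete_alpha_labeling V E f k"
  shows "\<exists>X Y xs ys. is_bipartition V E X Y \<and>
        bij_betw xs {1..card X} X \<and> bij_betw ys {1..card Y} Y \<and>
        completely_graceful (card X) (card Y) (biadj_matrix E xs ys)"
proof -
  define m where "m = card E"
  have bijf: "bij_betw f V {0..m}" using cal unfolding complete_alpha_labeling_def m_def by blast
  have dist: "{u,v} = {u',v'}" if "{u,v} \<in> E" "{u',v'} \<in> E"
      "\<bar>int (f u) - int (f v)\<bar> = \<bar>int (f u') - int (f v')\<bar>" for u v u' v'
    using cal that unfolding complete_alpha_labeling_def by blast
  have crit: "(f u \<le> k \<and> k < f v) \<or> (f v \<le> k \<and> k < f u)" if "{u,v} \<in> E" for u v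
    using cal that unfolding complete_alpha_labeling_def by blast
  have finE: "finite E" using sg by (rule finite_E)
  have injf: "inj_on f V" and imgf: "f ` V = {0..m}" using bijf unfolding bij_betw_def by auto
  define X where "X = {v\<in>V. f v \<le> k}"
  define Y where "Y = {v\<in>V. k < f v}"
  define r where "r = min k m"
  have XY: "X \<union> Y = V" "X \<inter> Y = {}" by (auto simp: X_def Y_def)
  have fV: "\<And>v. v \<in> V \<Longrightarrow> f v \<le> m" using imgf by auto
  have fX: "f ` X = {0..r}"
  proof
    show "f ` X \<subseteq> {0..r}" using fV unfolding X_def r_def by auto
    show "{0..r} \<subseteq> f ` X"
    proof
      fix n assume n: "n \<in> {0..r}"
      hence "n \<in> f ` V" using imgf unfolding r_def by auto
      then obtain v where v: "v \<in> V" "n = f v" by blast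
      hence "v \<in> X" using n unfolding X_def r_def by auto
      thus "n \<in> f ` X" using v by blast
    qed
  qed
  have fY: "f ` Y = {Suc r..m}"
  proof
    show "f ` Y \<subseteq> {Suc r..m}" using fV unfolding Y_def r_def by auto
    show "{Suc r..m} \<subseteq> f ` Y"
    proof
      fix n assume n: "n \<in> {Suc r..m}"
      hence "n \<in> f ` V" using imgf unfolding r_def by auto
      then obtain v where v: "v \<in> V" "n = f v" by blast
      hence "v \<in> Y" using n unfolding Y_def r_def by auto
      thus "n \<in> f ` Y" using v by blast
    qed
  qed
  have injX: "inj_on f X" using injf unfolding X_def by (rule inj_on_subset) auto
  have injY: "inj_on f Y" using injf unfolding Y_def by (rule inj_on_subset) auto
  define p where "p = card X"
  define q where "q = card Y"
  have rm: "r \<le> m" unfolding r_def by simp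
  have pr: "p = Suc r" using card_image[OF injX] fX unfolding p_def by simp
  have qr: "q = m - r" using card_image[OF injY] fY unfolding q_def by simp
  have bX: "bij_betw f X {0..r}" by (simp add: bij_betw_def injX fX)
  have bY: "bij_betw f Y {Suc r..m}" by (simp add: bij_betw_def injY fY)
  define xs where "xs = (\<lambda>i. the_inv_into X f (i - 1))"
  define ys where "ys = (\<lambda>j. the_inv_into Y f (j + r))"
  have s1: "bij_betw (\<lambda>i. i - 1) {1..p} {0..r}"
    by (rule bij_betw_byWitness[where f'=Suc]) (auto simp: pr)
  have s2: "bij_betw (\<lambda>j. j + r) {1..q} {Suc r..m}"
    by (rule bij_betw_byWitness[where f'="\<lambda>n. n - r"]) (auto simp: qr)
  have bxs: "bij_betw xs {1..p} X"
    using bij_betw_trans[OF s1 bij_betw_the_inv_into[OF bX]] unfolding xs_def comp_def .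
  have bys: "bij_betw ys {1..q} Y"
    using bij_betw_trans[OF s2 bij_betw_the_inv_into[OF bY]] unfolding ys_def comp_def .
  have fxs: "f (xs i) = i - 1" if i: "i \<in> {1..p}" for i
  proof -
    have "i - 1 \<in> f ` X" using i fX pr by auto
    thus ?thesis unfolding xs_def by (rule f_the_inv_into_f[OF injX])
  qed
  have fys: "f (ys j) = j + r" if j: "j \<in> {1..q}" for j
  proof -
    have "j + r \<in> f ` Y" using j fY qr by auto
    thus ?thesis unfolding ys_def by (rule f_the_inv_into_f[OF injY])
  qed
  have xsX: "\<And>i. i \<in> {1..p} \<Longrightarrow> xs i \<in> X" using bxs bij_betw_apply by metis
  have ysY: "\<And>j. j \<in> {1..q} \<Longrightarrow> ys j \<in> Y" using bys bij_betw_apply by metis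
  have injxs: "inj_on xs {1..p}" using bxs bij_betw_imp_inj_on by blast
  have injys: "inj_on ys {1..q}" using bys bij_betw_imp_inj_on by blast
  have bip: "is_bipartition V E X Y"
    unfolding is_bipartition_def
  proof (intro conjI allI impI)
    fix u v assume uv: "{u,v} \<in> E"
    have "u \<in> V" "v \<in> V" using edge_in_V[OF sg uv] by auto
    thus "u \<in> X \<and> v \<in> Y \<or> u \<in> Y \<and> v \<in> X" using crit[OF uv] unfolding X_def Y_def by auto
  qed (use XY in auto)
  have absf: "\<bar>int (f (xs i)) - int (f (ys j))\<bar> = int (p + j - i)"
    if i: "i \<in> {1..p}" and j: "j \<in> {1..q}" for i j
    using fxs[OF i] fys[OF j] i j pr by auto
  define L where "L = (\<lambda>e. Max (f ` e) - Min (f ` e))"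
  have Lform: "L {u,v} = nat \<bar>int (f u) - int (f v)\<bar>" for u v
    by (cases "f u \<le> f v") (auto simp: L_def max_def min_def)
  have Eform: "\<And>e. e \<in> E \<Longrightarrow> \<exists>u v. e = {u,v}" using sg unfolding simple_graph_def by blast
  have injL: "inj_on L E"
  proof (rule inj_onI)
    fix e e' assume e: "e \<in> E" and e': "e' \<in> E" and le: "L e = L e'"
    obtain u v where uv: "e = {u,v}" using Eform[OF e] by blast
    obtain u' v' where uv': "e' = {u',v'}" using Eform[OF e'] by blast
    have "\<bar>int (f u) - int (f v)\<bar> = \<bar>int (f u') - int (f v')\<bar>"
      using le uv uv' Lform by simp
    thus "e = e'" using dist e e' uv uv' by simp
  qed
  have Lrange: "L ` E \<subseteq> {1..m}"
  proof
    fix n assume "n \<in> L ` E"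
    then obtain e where e: "e \<in> E" "n = L e" by blast
    obtain u v where uv: "e = {u,v}" using Eform[OF e(1)] by blast
    have uvV: "u \<in> V" "v \<in> V" "u \<noteq> v" using edge_in_V[OF sg] e uv by auto
    hence "f u \<noteq> f v" using injf unfolding inj_on_def by blast
    moreover have "f u \<le> m" "f v \<le> m" using fV uvV by auto
    ultimately show "n \<in> {1..m}" using e uv Lform by auto
  qed
  have LE: "L ` E = {1..m}"
    using card_image[OF injL] Lrange by (intro card_subset_eq) (auto simp: m_def)
  have pqm: "p + q - 1 = m" using pr qr rm by simp
  have cg: "completely_graceful p q (biadj_matrix E xs ys)"
    unfolding completely_graceful_def
  proof (intro conjI ballI)
    fix i j show "biadj_matrix E xs ys i j \<in> {0, 1}" by (simp add: biadj_matrix_def)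
  next
    fix c assume c: "c \<in> {1..p + q - 1}"
    hence "c \<in> L ` E" using LE pqm by simp
    then obtain e where e: "e \<in> E" "c = L e" by blast
    obtain u v where uv: "e = {u,v}" using Eform[OF e(1)] by blast
    have "\<exists>u' v'. e = {u',v'} \<and> u' \<in> X \<and> v' \<in> Y"
      using bip e uv unfolding is_bipartition_def by (metis insert_commute)
    then obtain x y where xy: "e = {x,y}" "x \<in> X" "y \<in> Y" by blast
    have fx: "f x \<le> r" using fX xy by auto
    have fy: "Suc r \<le> f y" "f y \<le> m" using fY xy by auto
    define i where "i = Suc (f x)"
    define j where "j = f y - r"
    have i: "i \<in> {1..p}" using fx pr unfolding i_def by simp
    have j: "j \<in> {1..q}" using fy qr unfolding j_def by auto
    have xi: "xs i = x" unfolding xs_def i_def using the_inv_into_f_f[OF injX xy(2)] by simp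
    have yj: "ys j = y" unfolding ys_def j_def using the_inv_into_f_f[OF injY xy(3)] fy by simp
    have ce: "c = p + j - i" using e xy Lform fx fy pr unfolding i_def j_def by auto
    have Eij: "{xs i, ys j} \<in> E" using xi yj e xy by simp
    show "\<exists>!ij. fst ij \<in> {1..p} \<and> snd ij \<in> {1..q} \<and> p + snd ij - fst ij = c \<and>
           biadj_matrix E xs ys (fst ij) (snd ij) = 1"
    proof (rule ex1I[where a="(i,j)"])
      show "fst (i,j) \<in> {1..p} \<and> snd (i,j) \<in> {1..q} \<and> p + snd (i,j) - fst (i,j) = c \<and>
           biadj_matrix E xs ys (fst (i,j)) (snd (i,j)) = 1"
        using i j ce Eij by (simp add: biadj_matrix_def)
    next
      fix ij assume h: "fst ij \<in> {1..p} \<and> snd ij \<in> {1..q} \<and> p + snd ij - fst ij = c \<and>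
           biadj_matrix E xs ys (fst ij) (snd ij) = 1"
      have E2: "{xs (fst ij), ys (snd ij)} \<in> E" using h by (simp add: biadj_matrix_def split: if_splits)
      have "\<bar>int (f (xs (fst ij))) - int (f (ys (snd ij)))\<bar> = \<bar>int (f (xs i)) - int (f (ys j))\<bar>"
      proof -
        have r: "fst ij \<in> {1..p}" "snd ij \<in> {1..q}" using h by auto
        have "p + snd ij - fst ij = p + j - i" using h ce by simp
        thus ?thesis using absf[OF i j] absf[OF r] by simp
      qed
      hence eq: "{xs (fst ij), ys (snd ij)} = {xs i, ys j}" using dist E2 Eij by blast
      have "xs (fst ij) \<in> X" "ys j \<in> Y" using xsX ysY h j by auto
      hence "xs (fst ij) \<noteq> ys j" using XY(2) by auto
      hence "xs (fst ij) = xs i \<and> ys (snd ij) = ys j" using eq by (simp add: doubleton_eq_iff)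
      hence "fst ij = i" "snd ij = j" using injxs injys h i j unfolding inj_on_def by blast+
      thus "ij = (i,j)" by (simp add: prod_eq_iff)
    qed
  qed
  show ?thesis using bip bxs bys cg unfolding p_def q_def by blast
qed

theorem corollary2p7:
  fixes V :: "'a set" and E :: "'a set set"
  assumes "is_tree V E"
  shows "has_complete_alpha_labeling V E \<longleftrightarrow>
    (\<exists>X Y xs ys. is_bipartition V E X Y \<and>
        bij_betw xs {1..card X} X \<and> bij_betw ys {1..card Y} Y \<and>
        completely_graceful (card X) (card Y) (biadj_matrix E xs ys))"
proof -
  have sg: "simple_graph V E" and ne: "V \<noteq> {}"
    using assms unfolding is_tree_def connected_graph_def by auto
  show ?thesis
  proof
    assume "has_complete_alpha_labeling V E"
    then obtain f k where "complete_alpha_labeling V E f k"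
      unfolding has_complete_alpha_labeling_def by blast
    thus "\<exists>X Y xs ys. is_bipartition V E X Y \<and>
        bij_betw xs {1..card X} X \<and> bij_betw ys {1..card Y} Y \<and>
        completely_graceful (card X) (card Y) (biadj_matrix E xs ys)"
      using fwd[OF sg] by blast
  next
    assume "\<exists>X Y xs ys. is_bipartition V E X Y \<and>
        bij_betw xs {1..card X} X \<and> bij_betw ys {1..card Y} Y \<and>
        completely_graceful (card X) (card Y) (biadj_matrix E xs ys)"
    thus "has_complete_alpha_labeling V E" using bwd[OF sg ne] by blast
  qed
qed

end
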